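(* Assume $\Gamma(0,0)=\delta-q\rho-\beta\psi_X'(0+)>0$, and let $$b_0=(\overline Z^{(q)})^{-1}\Big(\frac{\delta-q\rho}{q\beta}-\frac{\psi_X'(0+)}{q}\Big)>0,$$ which is the unique root of $\Gamma(0,b_0)=0$. Then: - $a^*=0$ (case (ii-1)) if $b_0\le(Z^{(q)})^{-1}(\beta^{-1})$; - $0<a^*<b^*$ (case (ii-2)) if $b_0>(Z^{(q)})^{-1}(\beta^{-1})$. Moreover, in both cases $$b_0\wedge(Z^{(q)})^{-1}(\beta^{-1})\le b^*\le b_0.$$
   Context: Let $Y$ be a spectrally positive Lévy process (not a subordinator) with Laplace exponent $\psi_Y(\theta)=\log\mathbb E[e^{-\theta Y_1}]$ and $\mathbb E[Y_1]=-\psi_Y'(0+)<\infty$. Fix $q>0$, $\delta>0$, $\beta\in(0,1)$, $\rho\in\mathbb R$, and let $\psi_X(\theta)=\psi_Y(\theta)+\delta\theta$. Scale functions: $\mathbb W^{(q)}$ (resp. $W^{(q)}$) vanishes on $(-\infty,0)$, is continuous and strictly increasing on $[0,\infty)$, and has Laplace transform $1/(\psi_Y(\theta)-q)$ (resp. $1/(\psi_X(\theta)-q)$) for large $\theta$. Let $\mathbb Z^{(q)}(x)=1+q\int_0^x\mathbb W^{(q)}$ and $Z^{(q)}(x)=1+q\int_0^xW^{(q)}$; the latter is strictly increasing on $[0,\infty)$ from $1$ to $\infty$. Let $\overline Z^{(q)}(x)=\int_0^xZ^{(q)}$, which is strictly increasing on $[0,\infty)$ from $0$ to $\infty$. Let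 $R^{(q)}(z)=\overline Z^{(q)}(z)+\psi_X'(0+)/q$ and $\tilde r^{(q)}_c(z)=R^{(q)}(z)+\delta\int_c^z\mathbb W^{(q)}(z-y)Z^{(q)}(y)\,dy$. Define $\Gamma(a,b)=\delta\mathbb Z^{(q)}(a)-q\rho-q\beta\tilde r^{(q)}_{b-a}(b)$ and $\gamma(a,b)=\beta^{-1}-Z^{(q)}(b-a)$ for $0\le a\le b$. The pair $(a^*,b^* )$ is defined as follows. If $\Gamma(0,0)\le0$, then $a^*=b^*=0$. Otherwise, $b^*>0$ is the unique root of $\min_{0\le a\le b^*}\Gamma(a,b^* )=0$, and $a^*$ is the unique minimizer of $a\mapsto\Gamma(a,b^* )$ on $[0,b^*]$. In case (ii-1), $a^*=0<b^*$; in case (ii-2), $0<a^*<b^*$ and $\gamma(a^*,b^* )=\Gamma(a^*,b^* )=0$. *)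

theory Defs
  imports "HOL-Analysis.Analysis"
begin

text \<open>Spectrally positive Levy process Y with finite mean, described by its
Levy-Khintchine triple (gam, sig, Lm): Lm is a Levy measure on (0,infinity) with
int min(z^2, z) Lm(dz) < infinity (Levy condition plus finite mean), and the
Laplace exponent psi_Y(theta) = log E[exp(-theta Y_1)] is, for theta >= 0,
  gam*theta + sig^2 theta^2/2 + int (exp(-theta z) - 1 + theta z) Lm(dz).\<close>

definition fm_levy_measure :: "real measure \<Rightarrow> bool" where
  "fm_levy_measure Lm \<longleftrightarrow> sets Lm = sets borel \<and> emeasure Lm {..0} = 0 \<and>
      integrable Lm (\<lambda>z. min (z\<^sup>2) z)"

definition psiLK :: "real \<Rightarrow> real \<Rightarrow> real measure \<Rightarrow> real \<Rightarrow> real" where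
  "psiLK gam sig Lm \<theta> = gam * \<theta> + sig\<^sup>2 * \<theta>\<^sup>2 / 2
      + (\<integral>z. (exp (- \<theta> * z) - 1 + \<theta> * z) \<partial>Lm)"

text \<open>Y is a subordinator iff no Gaussian part, jumps of bounded variation
and nonnegative drift d = -(gam + int z Lm(dz)).\<close>
definition is_subordinator_LK :: "real \<Rightarrow> real \<Rightarrow> real measure \<Rightarrow> bool" where
  "is_subordinator_LK gam sig Lm \<longleftrightarrow>
     sig = 0 \<and> integrable Lm (\<lambda>z. z) \<and> gam + (\<integral>z. z \<partial>Lm) \<le> 0"

definition is_scale_function :: "(real \<Rightarrow> real) \<Rightarrow> real \<Rightarrow> (real \<Rightarrow> real) \<Rightarrow> bool" where
  "is_scale_function psi q W \<longleftrightarrow>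
     (\<forall>x<0. W x = 0) \<and> continuous_on {0..} W \<and> strict_mono_on {0..} W \<and>
     (\<exists>\<theta>0. \<forall>\<theta>>\<theta>0. ((\<lambda>x. exp (- \<theta> * x) * W x) has_integral (1 / (psi \<theta> - q))) {0..})"

definition Zfun :: "real \<Rightarrow> (real \<Rightarrow> real) \<Rightarrow> real \<Rightarrow> real" where
  "Zfun q W x = 1 + q * integral {0..x} W"

definition Zbar :: "real \<Rightarrow> (real \<Rightarrow> real) \<Rightarrow> real \<Rightarrow> real" where
  "Zbar q W x = integral {0..x} (Zfun q W)"

text \<open>R^(q)(z) = Zbar(z) + psi_X'(0+)/q, with dX = psi_X'(0+).\<close>
definition Rfun :: "real \<Rightarrow> (real \<Rightarrow> real) \<Rightarrow> real \<Rightarrow> real \<Rightarrow> real" where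
  "Rfun q W dX z = Zbar q W z + dX / q"

text \<open>tilde r^(q)_c(z); WW is the scale function of Y, W that of X.\<close>
definition rtilde :: "real \<Rightarrow> real \<Rightarrow> (real \<Rightarrow> real) \<Rightarrow> (real \<Rightarrow> real) \<Rightarrow> real \<Rightarrow> real \<Rightarrow> real \<Rightarrow> real" where
  "rtilde q \<delta> WW W dX c z = Rfun q W dX z + \<delta> * integral {c..z} (\<lambda>y. WW (z - y) * Zfun q W y)"

definition GammaF :: "real \<Rightarrow> real \<Rightarrow> real \<Rightarrow> real \<Rightarrow> (real \<Rightarrow> real) \<Rightarrow> (real \<Rightarrow> real) \<Rightarrow> real
                      \<Rightarrow> real \<Rightarrow> real \<Rightarrow> real" where
  "GammaF q \<delta> \<beta> \<rho> WW W dX a b =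
     \<delta> * Zfun q WW a - q * \<rho> - q * \<beta> * rtilde q \<delta> WW W dX (b - a) b"

end

theory Submission
  imports Defs "HOL-Real_Asymp.Real_Asymp"
begin


lemma integral_pos_sub:
  fixes f :: "real \<Rightarrow> real"
  assumes int: "f integrable_on {s..t}" and nn: "\<forall>x\<in>{s..t}. f x \<ge> 0"
    and m: "s \<le> m" "m < m'" "m' \<le> t" and e: "\<forall>x\<in>{m..m'}. f x \<ge> e" "e > 0"
  shows "integral {s..t} f > 0"
proof -
  have i1: "f integrable_on {s..m'}" using m by (intro integrable_subinterval_real[OF int]) auto
  have "integral {s..m} f + integral {m..m'} f = integral {s..m'} f"
    using m i1 by (intro Henstock_Kurzweil_Integration.integral_combine) auto
  moreover have "integral {s..m'} f + integral {m'..t} f = integral {s..t} f"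
    using m int by (intro Henstock_Kurzweil_Integration.integral_combine) auto
  moreover have "integral {s..m} f \<ge> 0"
    using nn m by (intro integral_nonneg integrable_subinterval_real[OF int]) auto
  moreover have "integral {m'..t} f \<ge> 0"
    using nn m by (intro integral_nonneg integrable_subinterval_real[OF int]) auto
  moreover have "integral {m..m'} f \<ge> integral {m..m'} (\<lambda>_. e)"
    using e m by (intro integral_le integrable_subinterval_real[OF int]) auto
  moreover have "integral {m..m'} (\<lambda>_. e) = (m' - m) * e" using m by simp
  moreover have "(m' - m) * e > 0" using m e by simp
  ultimately show ?thesis by linarith
qed

lemma integral_reflect_shift:
  fixes f :: "real \<Rightarrow> real"
  assumes "f integrable_on {0..a}" "0 \<le> a"
  shows "integral {b-a..b} (\<lambda>y. f (b - y)) = integral {0..a} f"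
proof -
  have "((\<lambda>x. f ((-1) *\<^sub>R x + b)) has_integral (1 / (\<bar>-1\<bar> ^ DIM(real))) *\<^sub>R integral {0..a} f)
        ((\<lambda>x. (1 / (-1)) *\<^sub>R x + -((1 / (-1)) *\<^sub>R b)) ` cbox 0 a)"
    by (rule has_integral_affinity) (use assms in auto)
  moreover have "(\<lambda>x. (1 / (-1)) *\<^sub>R x + -((1 / (-1)) *\<^sub>R b)) ` cbox 0 a = {b-a..b}"
  proof -
    have "(\<lambda>x::real. b - x) ` {0..a} = {b-a..b}"
    proof
      show "{b-a..b} \<subseteq> (\<lambda>x::real. b - x) ` {0..a}"
      proof
        fix y assume "y \<in> {b-a..b}" then show "y \<in> (\<lambda>x::real. b - x) ` {0..a}"
          by (intro image_eqI[of _ _ "b - y"]) auto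
      qed
    qed auto
    then show ?thesis by (simp add: algebra_simps)
  qed
  ultimately have "((\<lambda>y. f (b - y)) has_integral integral {0..a} f) {b-a..b}"
    by (simp add: algebra_simps)
  then show ?thesis by (rule integral_unique)
qed

lemma scale_facts:
  assumes "is_scale_function psi q W"
  shows "continuous_on {0..} W" "\<And>x y. 0 \<le> x \<Longrightarrow> x < y \<Longrightarrow> W x < W y"
  using assms unfolding is_scale_function_def strict_mono_on_def by auto

lemma Zfun_cont:
  assumes "continuous_on {0..} W"
  shows "continuous_on {0..B} (Zfun q W)"
proof -
  have cW: "continuous_on {0..B} W" using assms by (rule continuous_on_subset) auto
  have "((\<lambda>u. integral {0..u} W) has_vector_derivative W x) (at x within {0..B})" if "x \<in> {0..B}" for x
    using integral_has_vector_derivative[OF cW that] .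
  then have "continuous_on {0..B} (\<lambda>u. integral {0..u} W)"
    using continuous_on_eq_continuous_within has_vector_derivative_continuous by blast
  then show ?thesis unfolding Zfun_def by (intro continuous_intros)
qed


lemma Zfun_0: "Zfun q W 0 = 1" unfolding Zfun_def by simp
lemma Zbar_0: "Zbar q W 0 = 0" unfolding Zbar_def by simp

lemma Zfun_mono:
  assumes c: "continuous_on {0..} W" and mono: "\<And>x y. 0 \<le> x \<Longrightarrow> x < y \<Longrightarrow> W x < W y"
    and W0: "W 0 \<ge> 0" and q: "q > 0" and xy: "0 \<le> x" "x < y"
  shows "Zfun q W x < Zfun q W y"
proof -
  have pos: "W x > 0" if "x > 0" for x using mono[of 0 x] that W0 by simp
  have nn: "W x \<ge> 0" if "x \<ge> 0" for x using pos[of x] that W0 by (cases "x = 0") auto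
  have cy: "continuous_on {0..y} W" using c by (rule continuous_on_subset) auto
  have iy: "W integrable_on {0..y}" using cy by (rule integrable_continuous_real)
  have "integral {0..x} W + integral {x..y} W = integral {0..y} W"
    using xy iy by (intro Henstock_Kurzweil_Integration.integral_combine) auto
  moreover have "integral {x..y} W > 0"
  proof (rule integral_pos_sub[of _ _ _ "(x+y)/2" y "W ((x+y)/2)"])
    show "W integrable_on {x..y}" using xy by (intro integrable_subinterval_real[OF iy]) auto
    show "\<forall>u\<in>{x..y}. 0 \<le> W u" using xy nn by auto
    show "\<forall>u\<in>{(x + y) / 2..y}. W ((x + y) / 2) \<le> W u"
    proof
      fix u assume u: "u \<in> {(x + y) / 2..y}"
      show "W ((x + y) / 2) \<le> W u"
      proof (cases "u = (x+y)/2")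
        case False then have "(x+y)/2 < u" using u by auto
        with xy have "W ((x + y) / 2) < W u"
          by (intro mono) auto
        then show ?thesis by simp
      next
        case True then have "(x+y)/2 = u" by simp then show ?thesis by (simp only:)
      qed
    qed
  qed (use xy pos in auto)
  ultimately show ?thesis using q unfolding Zfun_def by (simp add: algebra_simps)
qed


lemma Zfun_ge1:
  assumes c: "continuous_on {0..} W" and mono: "\<And>x y. 0 \<le> x \<Longrightarrow> x < y \<Longrightarrow> W x < W y"
    and W0: "W 0 \<ge> 0" and q: "q > 0" and x: "0 \<le> x"
  shows "Zfun q W x \<ge> 1"
  using Zfun_mono[OF c mono W0 q, of 0 x] x Zfun_0[of q W] by (cases "x = 0") auto

lemma Zbar_mono:
  assumes c: "continuous_on {0..} W" and mono: "\<And>x y. 0 \<le> x \<Longrightarrow> x < y \<Longrightarrow> W x < W y"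
    and W0: "W 0 \<ge> 0" and q: "q > 0" and xy: "0 \<le> x" "x < y"
  shows "Zbar q W x < Zbar q W y"
proof -
  have iy: "Zfun q W integrable_on {0..y}" using Zfun_cont[OF c] by (rule integrable_continuous_real)
  have "integral {0..x} (Zfun q W) + integral {x..y} (Zfun q W) = integral {0..y} (Zfun q W)"
    using xy iy by (intro Henstock_Kurzweil_Integration.integral_combine) auto
  moreover have "integral {x..y} (Zfun q W) \<ge> integral {x..y} (\<lambda>_. 1)"
    using xy Zfun_ge1[OF c mono W0 q] by (intro integral_le integrable_subinterval_real[OF iy]) auto
  ultimately show ?thesis using xy unfolding Zbar_def by simp
qed

lemma Zbar_inj:
  assumes c: "continuous_on {0..} W" and mono: "\<And>x y. 0 \<le> x \<Longrightarrow> x < y \<Longrightarrow> W x < W y"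
    and W0: "W 0 \<ge> 0" and q: "q > 0" and xy: "0 \<le> x" "0 \<le> y" and eq: "Zbar q W x = Zbar q W y"
  shows "x = y"
  using Zbar_mono[OF c mono W0 q, of x y] Zbar_mono[OF c mono W0 q, of y x] xy eq
  by (cases x y rule: linorder_cases) auto

lemma Gamma0:
  assumes "q \<noteq> 0" shows "GammaF q \<delta> \<beta> \<rho> WW W dX 0 b = \<delta> - q * \<rho> - \<beta> * dX - q * \<beta> * Zbar q W b"
  using assms unfolding GammaF_def rtilde_def Rfun_def Zfun_def
  by (auto simp: algebra_simps)


lemma cont_refl:
  fixes WW :: "real \<Rightarrow> real"
  assumes "continuous_on {0..} WW" "0 \<le> a" "a \<le> b"
  shows "continuous_on {b-a..b} (\<lambda>y. WW (b - y))"
proof (rule continuous_on_compose2[OF assms(1)])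
  show "continuous_on {b-a..b} (\<lambda>y. b - y)" by (rule continuous_on_op_minus)
qed auto

lemma cont_F:
  assumes cWW: "continuous_on {0..} WW" and cW: "continuous_on {0..} W" and ab: "0 \<le> a" "a \<le> b"
  shows "continuous_on {b-a..b} (\<lambda>y. WW (b-y) * (1 - \<beta> * Zfun q W y))"
proof -
  have "continuous_on {b-a..b} (Zfun q W)"
    using Zfun_cont[OF cW, of b] by (rule continuous_on_subset) (use ab in auto)
  then show ?thesis using cont_refl[OF cWW ab] by (intro continuous_intros)
qed

lemma Gamma_diff:
  assumes cWW: "continuous_on {0..} WW" and cW: "continuous_on {0..} W" and ab: "0 \<le> a" "a \<le> b"
    and q: "q \<noteq> 0"
  shows "GammaF q \<delta> \<beta> \<rho> WW W dX a b - GammaF q \<delta> \<beta> \<rho> WW W dX 0 b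
       = q * \<delta> * integral {b-a..b} (\<lambda>y. WW (b-y) * (1 - \<beta> * Zfun q W y))"
proof -
  have cZ: "continuous_on {b-a..b} (Zfun q W)"
    using Zfun_cont[OF cW, of b] by (rule continuous_on_subset) (use ab in auto)
  have cR: "continuous_on {b-a..b} (\<lambda>y. WW (b - y))" by (rule cont_refl[OF cWW ab])
  have i1: "(\<lambda>y. WW (b - y)) integrable_on {b-a..b}" using cR by (rule integrable_continuous_real)
  have i2: "(\<lambda>y. WW (b - y) * Zfun q W y) integrable_on {b-a..b}"
    using cR cZ by (intro integrable_continuous_real continuous_intros)
  have r: "integral {b-a..b} (\<lambda>y. WW (b - y)) = integral {0..a} WW"
    by (rule integral_reflect_shift) (use ab cWW in \<open>auto intro!: integrable_continuous_real elim: continuous_on_subset\<close>)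
  have e: "integral {b-a..b} (\<lambda>y. WW (b-y) * (1 - \<beta> * Zfun q W y))
     = integral {b-a..b} (\<lambda>y. WW (b - y)) - \<beta> * integral {b-a..b} (\<lambda>y. WW (b - y) * Zfun q W y)"
  proof -
    have "integral {b-a..b} (\<lambda>y. WW (b-y) * (1 - \<beta> * Zfun q W y))
       = integral {b-a..b} (\<lambda>y. WW (b - y) - \<beta> * (WW (b - y) * Zfun q W y))"
      by (simp add: algebra_simps)
    also have "\<dots> = integral {b-a..b} (\<lambda>y. WW (b - y)) - integral {b-a..b} (\<lambda>y. \<beta> * (WW (b - y) * Zfun q W y))"
      using i1 cR cZ by (intro integral_diff integrable_continuous_real continuous_intros)
    also have "integral {b-a..b} (\<lambda>y. \<beta> * (WW (b - y) * Zfun q W y)) = \<beta> * integral {b-a..b} (\<lambda>y. WW (b - y) * Zfun q W y)"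
      by simp
    finally show ?thesis .
  qed
  show ?thesis
    unfolding e r using q unfolding GammaF_def rtilde_def Rfun_def Zfun_def
    by (simp add: algebra_simps)
qed


lemma mono_le:
  fixes f :: "real \<Rightarrow> real"
  assumes "\<And>x y. 0 \<le> x \<Longrightarrow> x < y \<Longrightarrow> f x < f y" "0 \<le> x" "x \<le> y"
  shows "f x \<le> f y"
  using assms by (cases "x = y") (auto intro: less_imp_le)

lemma D_pos:
  fixes WW W :: "real \<Rightarrow> real"
  assumes cWW: "continuous_on {0..} WW" and mWW: "\<And>x y. 0 \<le> x \<Longrightarrow> x < y \<Longrightarrow> WW x < WW y" and WW0: "WW 0 \<ge> 0"
    and cW: "continuous_on {0..} W" and mW: "\<And>x y. 0 \<le> x \<Longrightarrow> x < y \<Longrightarrow> W x < W y" and W0: "W 0 \<ge> 0"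
    and q: "q > 0" and beta: "\<beta> > 0" and zb: "zb \<ge> 0" "Zfun q W zb = 1 / \<beta>"
    and ab: "0 < a" "a \<le> b" "b \<le> zb"
  shows "integral {b-a..b} (\<lambda>y. WW (b-y) * (1 - \<beta> * Zfun q W y)) > 0"
proof -
  let ?Z = "Zfun q W"
  have mZ: "?Z x < ?Z y" if "0 \<le> x" "x < y" for x y using Zfun_mono[OF cW mW W0 q that] .
  have Zle: "?Z x \<le> ?Z y" if "0 \<le> x" "x \<le> y" for x y using mono_le[of ?Z, OF mZ] that by blast
  have WWle: "WW x \<le> WW y" if "0 \<le> x" "x \<le> y" for x y using mono_le[of WW, OF mWW] that by blast
  have WWnn: "WW x \<ge> 0" if "0 \<le> x" for x using WWle[of 0 x] that WW0 by simp
  have bZ: "\<beta> * ?Z zb = 1" using zb beta by simp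
  show ?thesis
  proof (rule integral_pos_sub[of _ _ _ "b-a" "b - a/2" "WW (a/2) * (1 - \<beta> * ?Z (b - a/2))"])
    show "(\<lambda>y. WW (b-y) * (1 - \<beta> * ?Z y)) integrable_on {b-a..b}"
      using cont_F[OF cWW cW, of a b] ab by (intro integrable_continuous_real) auto
    show "\<forall>x\<in>{b - a..b}. 0 \<le> WW (b - x) * (1 - \<beta> * ?Z x)"
    proof
      fix x assume x: "x \<in> {b-a..b}"
      have "?Z x \<le> ?Z zb" using x ab by (intro Zle) auto
      then have "\<beta> * ?Z x \<le> 1" using bZ beta by (metis mult_left_mono less_imp_le)
      then show "0 \<le> WW (b - x) * (1 - \<beta> * ?Z x)" using WWnn[of "b-x"] x by auto
    qed
    have Zl: "?Z (b - a/2) < ?Z zb" using ab by (intro mZ) auto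
    have "\<beta> * ?Z (b - a/2) < 1" using mult_strict_left_mono[OF Zl beta] bZ by simp
    moreover have "WW (a/2) > 0" using mWW[of 0 "a/2"] ab WW0 by simp
    ultimately show "0 < WW (a/2) * (1 - \<beta> * ?Z (b - a/2))" by simp
    show "\<forall>x\<in>{b - a..b - a / 2}. WW (a / 2) * (1 - \<beta> * ?Z (b - a / 2)) \<le> WW (b - x) * (1 - \<beta> * ?Z x)"
    proof
      fix x assume x: "x \<in> {b - a..b - a / 2}"
      have "?Z x \<le> ?Z (b - a/2)" using x ab by (intro Zle) auto
      then have "1 - \<beta> * ?Z (b - a/2) \<le> 1 - \<beta> * ?Z x" using beta by (simp add: mult_left_mono)
      moreover have "WW (a/2) \<le> WW (b - x)" using x ab by (intro WWle) auto
      moreover have "WW (a/2) \<ge> 0" using ab by (intro WWnn) auto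
      moreover have "1 - \<beta> * ?Z (b - a/2) \<ge> 0" using \<open>\<beta> * ?Z (b - a/2) < 1\<close> by simp
      ultimately show "WW (a / 2) * (1 - \<beta> * ?Z (b - a / 2)) \<le> WW (b - x) * (1 - \<beta> * ?Z x)"
        by (intro mult_mono) auto
    qed
  qed (use ab in auto)
qed


lemma D_neg:
  fixes WW W :: "real \<Rightarrow> real"
  assumes cWW: "continuous_on {0..} WW" and mWW: "\<And>x y. 0 \<le> x \<Longrightarrow> x < y \<Longrightarrow> WW x < WW y" and WW0: "WW 0 \<ge> 0"
    and cW: "continuous_on {0..} W" and mW: "\<And>x y. 0 \<le> x \<Longrightarrow> x < y \<Longrightarrow> W x < W y" and W0: "W 0 \<ge> 0"
    and q: "q > 0" and beta: "\<beta> > 0" and zb: "zb \<ge> 0" "Zfun q W zb = 1 / \<beta>"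
    and ab: "0 < a" "a \<le> b" "zb < b - a"
  shows "integral {b-a..b} (\<lambda>y. WW (b-y) * (1 - \<beta> * Zfun q W y)) < 0"
proof -
  let ?Z = "Zfun q W"
  have mZ: "?Z x < ?Z y" if "0 \<le> x" "x < y" for x y using Zfun_mono[OF cW mW W0 q that] .
  have Zle: "?Z x \<le> ?Z y" if "0 \<le> x" "x \<le> y" for x y using mono_le[of ?Z, OF mZ] that by blast
  have WWle: "WW x \<le> WW y" if "0 \<le> x" "x \<le> y" for x y using mono_le[of WW, OF mWW] that by blast
  have WWnn: "WW x \<ge> 0" if "0 \<le> x" for x using WWle[of 0 x] that WW0 by simp
  have bZ: "\<beta> * ?Z zb = 1" using zb beta by simp
  have Zl: "?Z zb < ?Z (b - a)" using ab zb by (intro mZ) auto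
  have bZ2: "\<beta> * ?Z (b - a) > 1" using mult_strict_left_mono[OF Zl beta] bZ by simp
  have "integral {b-a..b} (\<lambda>y. - (WW (b-y) * (1 - \<beta> * ?Z y))) > 0"
  proof (rule integral_pos_sub[of _ _ _ "b-a" "b - a/2" "WW (a/2) * (\<beta> * ?Z (b - a) - 1)"])
    show "(\<lambda>y. - (WW (b-y) * (1 - \<beta> * ?Z y))) integrable_on {b-a..b}"
      using cont_F[OF cWW cW, of a b \<beta> q] ab by (intro integrable_continuous_real continuous_on_minus) auto
    show "\<forall>x\<in>{b - a..b}. 0 \<le> - (WW (b - x) * (1 - \<beta> * ?Z x))"
    proof
      fix x assume x: "x \<in> {b-a..b}"
      have "?Z (b-a) \<le> ?Z x" using x ab zb by (intro Zle) auto
      then have "\<beta> * ?Z x \<ge> 1" using bZ2 beta by (smt (verit) mult_left_mono)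
      then show "0 \<le> - (WW (b - x) * (1 - \<beta> * ?Z x))" using WWnn[of "b-x"] x
        by (simp add: mult_nonneg_nonpos)
    qed
    have "WW (a/2) > 0" using mWW[of 0 "a/2"] ab WW0 by simp
    then show "0 < WW (a/2) * (\<beta> * ?Z (b - a) - 1)" using bZ2 by simp
    show "\<forall>x\<in>{b - a..b - a / 2}. WW (a / 2) * (\<beta> * ?Z (b - a) - 1) \<le> - (WW (b - x) * (1 - \<beta> * ?Z x))"
    proof
      fix x assume x: "x \<in> {b - a..b - a / 2}"
      have "?Z (b-a) \<le> ?Z x" using x ab zb by (intro Zle) auto
      then have "\<beta> * ?Z (b - a) - 1 \<le> \<beta> * ?Z x - 1" using beta by (simp add: mult_left_mono)
      moreover have "WW (a/2) \<le> WW (b - x)" using x ab by (intro WWle) auto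
      moreover have "WW (a/2) \<ge> 0" using ab by (intro WWnn) auto
      moreover have "\<beta> * ?Z (b - a) - 1 \<ge> 0" using bZ2 by simp
      ultimately have "WW (a / 2) * (\<beta> * ?Z (b - a) - 1) \<le> WW (b - x) * (\<beta> * ?Z x - 1)"
        by (intro mult_mono) auto
      then show "WW (a / 2) * (\<beta> * ?Z (b - a) - 1) \<le> - (WW (b - x) * (1 - \<beta> * ?Z x))"
        by (simp add: algebra_simps)
    qed
  qed (use ab in auto)
  then show ?thesis by simp
qed

lemma D_end:
  fixes WW W :: "real \<Rightarrow> real"
  assumes cWW: "continuous_on {0..} WW" and mWW: "\<And>x y. 0 \<le> x \<Longrightarrow> x < y \<Longrightarrow> WW x < WW y" and WW0: "WW 0 \<ge> 0"
    and cW: "continuous_on {0..} W" and mW: "\<And>x y. 0 \<le> x \<Longrightarrow> x < y \<Longrightarrow> W x < W y" and W0: "W 0 \<ge> 0"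
    and q: "q > 0" and beta: "\<beta> > 0" and zb: "zb \<ge> 0" "Zfun q W zb = 1 / \<beta>"
    and e: "0 < e" "e < b" "e < zb"
  shows "integral {0..e} (\<lambda>y. WW (b-y) * (1 - \<beta> * Zfun q W y)) > 0"
proof -
  let ?Z = "Zfun q W"
  have mZ: "?Z x < ?Z y" if "0 \<le> x" "x < y" for x y using Zfun_mono[OF cW mW W0 q that] .
  have Zle: "?Z x \<le> ?Z y" if "0 \<le> x" "x \<le> y" for x y using mono_le[of ?Z, OF mZ] that by blast
  have WWle: "WW x \<le> WW y" if "0 \<le> x" "x \<le> y" for x y using mono_le[of WW, OF mWW] that by blast
  have WWnn: "WW x \<ge> 0" if "0 \<le> x" for x using WWle[of 0 x] that WW0 by simp
  have bZ: "\<beta> * ?Z zb = 1" using zb beta by simp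
  have Zl: "?Z e < ?Z zb" using e by (intro mZ) auto
  have bZ2: "\<beta> * ?Z e < 1" using mult_strict_left_mono[OF Zl beta] bZ by simp
  have WWp: "WW (b - e) > 0" using mWW[of 0 "b - e"] e WW0 by simp
  show ?thesis
  proof (rule integral_pos_sub[of _ _ _ 0 e "WW (b - e) * (1 - \<beta> * ?Z e)"])
    have "continuous_on {b-b..b} (\<lambda>y. WW (b-y) * (1 - \<beta> * ?Z y))"
      using e by (intro cont_F[OF cWW cW]) auto
    then show "(\<lambda>y. WW (b-y) * (1 - \<beta> * ?Z y)) integrable_on {0..e}"
      using e by (intro integrable_continuous_real) (auto elim: continuous_on_subset)
    have *: "WW (b - e) * (1 - \<beta> * ?Z e) \<le> WW (b - x) * (1 - \<beta> * ?Z x)" if x: "x \<in> {0..e}" for x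
    proof -
      have "?Z x \<le> ?Z e" using x by (intro Zle) auto
      then have "1 - \<beta> * ?Z e \<le> 1 - \<beta> * ?Z x" using beta by (simp add: mult_left_mono)
      moreover have "WW (b - e) \<le> WW (b - x)" using x e by (intro WWle) auto
      ultimately show ?thesis using WWp bZ2 by (intro mult_mono) auto
    qed
    then show "\<forall>x\<in>{0..e}. WW (b - e) * (1 - \<beta> * ?Z e) \<le> WW (b - x) * (1 - \<beta> * ?Z x)" by blast
    show "0 < WW (b - e) * (1 - \<beta> * ?Z e)" using WWp bZ2 by simp
    then show "\<forall>x\<in>{0..e}. 0 \<le> WW (b - x) * (1 - \<beta> * ?Z x)" using * by force
  qed (use e in auto)
qed


lemma main_core:
  fixes WW W :: "real \<Rightarrow> real"
  assumes cWW: "continuous_on {0..} WW" and mWW: "\<And>x y. 0 \<le> x \<Longrightarrow> x < y \<Longrightarrow> WW x < WW y" and WW0: "WW 0 \<ge> 0"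
    and cW: "continuous_on {0..} W" and mW: "\<And>x y. 0 \<le> x \<Longrightarrow> x < y \<Longrightarrow> W x < W y" and W0: "W 0 \<ge> 0"
    and q: "q > 0" and delta: "\<delta> > 0" and beta: "0 < \<beta>" "\<beta> < 1"
    and Gam00: "GammaF q \<delta> \<beta> \<rho> WW W dX 0 0 > 0"
    and b0: "b0 \<ge> 0" "Zbar q W b0 = (\<delta> - q * \<rho>) / (q * \<beta>) - dX / q"
    and zb: "zb \<ge> 0" "Zfun q W zb = 1 / \<beta>"
    and bstar: "bstar > 0"
    and astar: "astar \<in> {0..bstar}"
    and astar_min: "\<forall>a\<in>{0..bstar}. GammaF q \<delta> \<beta> \<rho> WW W dX astar bstar
                                      \<le> GammaF q \<delta> \<beta> \<rho> WW W dX a bstar"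
    and min_zero: "GammaF q \<delta> \<beta> \<rho> WW W dX astar bstar = 0"
  shows "b0 > 0 \<and> GammaF q \<delta> \<beta> \<rho> WW W dX 0 b0 = 0
       \<and> (b0 \<le> zb \<longrightarrow> astar = 0)
       \<and> (b0 > zb \<longrightarrow> 0 < astar \<and> astar < bstar)
       \<and> min b0 zb \<le> bstar \<and> bstar \<le> b0"
proof -
  let ?G = "GammaF q \<delta> \<beta> \<rho> WW W dX"
  let ?F = "\<lambda>b y. WW (b-y) * (1 - \<beta> * Zfun q W y)"
  have qn: "q \<noteq> 0" using q by simp
  have G0: "?G 0 b = \<delta> - q * \<rho> - \<beta> * dX - q * \<beta> * Zbar q W b" for b using Gamma0[OF qn] .
  have Gd: "?G a b - ?G 0 b = q * \<delta> * integral {b-a..b} (?F b)" if "0 \<le> a" "a \<le> b" for a b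
    using Gamma_diff[OF cWW cW that qn] .
  have K: "\<delta> - q * \<rho> - \<beta> * dX > 0" using Gam00 G0[of 0] Zbar_0[of q W] by simp
  have Zb0: "q * \<beta> * Zbar q W b0 = \<delta> - q * \<rho> - \<beta> * dX"
  proof -
    have "q * \<beta> * Zbar q W b0 = q * \<beta> * ((\<delta> - q * \<rho>) / (q * \<beta>) - dX / q)" using b0(2) by simp
    also have "\<dots> = \<delta> - q * \<rho> - \<beta> * dX" using q beta by (simp add: field_simps)
    finally show ?thesis .
  qed
  have Gb0: "?G 0 b0 = 0" using G0[of b0] Zb0 by simp
  have b0pos: "b0 > 0"
  proof (rule ccontr)
    assume "\<not> b0 > 0" then have "b0 = 0" using b0 by simp
    then show False using Zb0 K Zbar_0[of q W] by simp
  qed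
  have qb: "q * \<beta> > 0" using q beta by simp
  have inj: "x = y" if "0 \<le> x" "0 \<le> y" "Zbar q W x = Zbar q W y" for x y
    using Zbar_inj[OF cW mW W0 q that] .
  have Gb0_iff: "?G 0 b = 0 \<Longrightarrow> b \<ge> 0 \<Longrightarrow> b = b0" for b
  proof -
    assume "?G 0 b = 0" "b \<ge> 0"
    then have "q * \<beta> * Zbar q W b = q * \<beta> * Zbar q W b0" using G0[of b] Zb0 by linarith
    then have "Zbar q W b = Zbar q W b0" using qb by (metis mult_cancel_left less_irrefl)
    then show "b = b0" using inj \<open>b \<ge> 0\<close> b0 by blast
  qed
  have zbpos: "zb > 0"
  proof (rule ccontr)
    assume "\<not> zb > 0" then have "zb = 0" using zb by simp
    then show False using zb(2) Zfun_0[of q W] beta by simp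
  qed
  have a0: "astar \<ge> 0" "astar \<le> bstar" using astar by auto
  have "?G 0 bstar \<ge> 0" using astar_min min_zero bstar by force
  then have "q * \<beta> * Zbar q W bstar \<le> q * \<beta> * Zbar q W b0" using G0[of bstar] Zb0 by simp
  then have "Zbar q W bstar \<le> Zbar q W b0" using qb by (metis mult_le_cancel_left_pos)
  then have bs_le: "bstar \<le> b0" using Zbar_mono[OF cW mW W0 q, of b0 bstar] b0 by force
  have small: "astar = 0 \<and> bstar = b0" if "bstar \<le> zb"
  proof -
    have "astar = 0"
    proof (rule ccontr)
      assume "astar \<noteq> 0" then have "astar > 0" using a0 by simp
      then have "integral {bstar-astar..bstar} (?F bstar) > 0"
        using D_pos[OF cWW mWW WW0 cW mW W0 q beta(1) zb, of astar bstar] a0 that by simp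
      then have "?G astar bstar > ?G 0 bstar" using Gd[OF a0] q delta by (smt (verit) mult_pos_pos)
      moreover have "?G astar bstar \<le> ?G 0 bstar" using astar_min bstar by auto
      ultimately show False by simp
    qed
    moreover have "bstar = b0" using min_zero \<open>astar = 0\<close> Gb0_iff bstar by simp
    ultimately show ?thesis by simp
  qed
  have lt: "astar < bstar"
  proof (rule ccontr)
    assume "\<not> astar < bstar" then have ab: "astar = bstar" using a0 by simp
    define e where "e = min zb bstar / 2"
    have e: "0 < e" "e < bstar" "e < zb" using zbpos bstar unfolding e_def by auto
    have I: "integral {0..e} (?F bstar) > 0"
      using D_end[OF cWW mWW WW0 cW mW W0 q beta(1) zb e] .
    have int: "?F bstar integrable_on {0..bstar}"
      using cont_F[OF cWW cW, of bstar bstar \<beta> q] bstar by (intro integrable_continuous_real) auto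
    have c1: "integral {0..bstar} (?F bstar) = integral {0..e} (?F bstar) + integral {e..bstar} (?F bstar)"
      using e int by (intro Henstock_Kurzweil_Integration.integral_combine[symmetric]) auto
    have c2: "?G bstar bstar - ?G 0 bstar = q * \<delta> * integral {0..bstar} (?F bstar)"
      using Gd[of bstar bstar] bstar by simp
    have c3: "?G (bstar - e) bstar - ?G 0 bstar = q * \<delta> * integral {e..bstar} (?F bstar)"
      using Gd[of "bstar - e" bstar] e by simp
    have c4: "q * \<delta> * integral {0..bstar} (?F bstar) = q * \<delta> * integral {0..e} (?F bstar) + q * \<delta> * integral {e..bstar} (?F bstar)"
      unfolding c1 by (simp add: distrib_left)
    have "?G bstar bstar - ?G (bstar - e) bstar = q * \<delta> * integral {0..e} (?F bstar)"
      using c2 c3 c4 by linarith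
    moreover have "q * \<delta> * integral {0..e} (?F bstar) > 0" using I q delta by simp
    moreover have "?G bstar bstar \<le> ?G (bstar - e) bstar" using astar_min ab e by auto
    ultimately show False by simp
  qed
  show ?thesis
  proof (cases "b0 \<le> zb")
    case True
    then have "astar = 0 \<and> bstar = b0" using small bs_le by simp
    then show ?thesis using True b0pos Gb0 by simp
  next
    case False
    have bs_ge: "zb \<le> bstar"
    proof (rule ccontr)
      assume "\<not> zb \<le> bstar" then have "bstar = b0" using small by simp
      with False \<open>\<not> zb \<le> bstar\<close> show False by simp
    qed
    have apos: "astar > 0"
    proof (rule ccontr)
      assume "\<not> astar > 0" then have as0: "astar = 0" using a0 by simp
      then have bb: "bstar = b0" using min_zero Gb0_iff bstar by simp
      define a where "a = (b0 - zb) / 2"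
      have d: "b0 - zb > 0" using False by linarith
      have a1: "0 < a" unfolding a_def using d by simp
      have a2: "a \<le> b0" unfolding a_def using d zb(1) by simp
      have a3: "zb < b0 - a" unfolding a_def using d by (simp add: field_simps)
      note a = a1 a2 a3
      have "integral {b0-a..b0} (?F b0) < 0"
        using D_neg[OF cWW mWW WW0 cW mW W0 q beta(1) zb a] .
      then have "q * \<delta> * integral {b0-a..b0} (?F b0) < 0" using q delta by (simp add: mult_pos_neg)
      then have "?G a b0 < ?G 0 b0" using Gd[of a b0] a by linarith
      moreover have "?G 0 b0 \<le> ?G a b0" using astar_min as0 bb a by simp
      ultimately show False by simp
    qed
    have "min b0 zb = zb" using False by simp
    then show ?thesis using False b0pos Gb0 bs_ge apos lt bs_le by simp
  qed
qed



lemma lim_aux: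
  fixes c t1 :: real assumes "c > 0"
  shows "((\<lambda>t. t * exp (-(t - t1) * c)) \<longlongrightarrow> 0) at_top"
  using assms by real_asymp

lemma scale_W0_nonneg:
  fixes W :: "real \<Rightarrow> real"
  assumes sc: "is_scale_function psi q W"
    and ev: "eventually (\<lambda>n. psi (real n) > q) sequentially"
  shows "W 0 \<ge> 0"
proof (rule ccontr)
  assume "\<not> W 0 \<ge> 0"
  define w where "w = W 0"
  have w: "w < 0" using \<open>\<not> W 0 \<ge> 0\<close> unfolding w_def by simp
  have cW: "continuous_on {0..} W" and mW: "\<And>x y. 0 \<le> x \<Longrightarrow> x < y \<Longrightarrow> W x < W y"
    using sc unfolding is_scale_function_def strict_mono_on_def by auto
  have Wge: "W x \<ge> w" if "x \<ge> 0" for x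
    using mW[of 0 x] that unfolding w_def by (cases "x = 0") auto
  have "\<forall>x\<in>{0..}. \<forall>e>0. \<exists>d>0. \<forall>x'\<in>{0..}. dist x' x < d \<longrightarrow> dist (W x') (W x) < e"
    using cW continuous_on_iff by blast
  then have ce: "\<forall>e>0. \<exists>d>0. \<forall>x'\<in>{0..}. dist x' 0 < d \<longrightarrow> dist (W x') (W 0) < e"
    by (rule bspec) simp
  have hw: "-w/2 > 0" using w by simp
  obtain d where d: "d > 0" "\<And>x. x \<in> {0..} \<Longrightarrow> dist x 0 < d \<Longrightarrow> dist (W x) (W 0) < -w/2"
    using ce[rule_format, OF hw] by blast
  define c where "c = d / 2"
  have c: "c > 0" using d unfolding c_def by simp
  have Wsmall: "W x \<le> w/2" if "0 \<le> x" "x \<le> c" for x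
  proof -
    have "dist (W x) (W 0) < -w/2" using d(2)[of x] that c_def d(1) by (simp add: dist_real_def)
    then show ?thesis unfolding w_def dist_real_def by (simp add: abs_less_iff)
  qed
  obtain t0 where t0: "\<And>t. t > t0 \<Longrightarrow> ((\<lambda>x. exp (- t * x) * W x) has_integral (1 / (psi t - q))) {0..}"
    using sc unfolding is_scale_function_def by blast
  define t1 where "t1 = max t0 0 + 1"
  have t1: "t1 > t0" "t1 > 0" unfolding t1_def by auto
  define M where "M = 1 / (psi t1 - q) - w / t1"
  have expint: "((\<lambda>x. exp (- t * x)) has_integral 1 / t) {0..}" if "t > 0" for t :: real
    using has_integral_exp_minus_to_infinity[OF that, of 0] by simp
  have bound: "1 / (psi t - q) \<le> (w/2) / t + exp (-(t - t1) * c) * M" if t: "t \<ge> t1" for t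
  proof -
    define K where "K = exp (-(t - t1) * c)"
    have K: "K > 0" unfolding K_def by simp
    have tp: "t > 0" "t > t0" using t t1 by auto
    have h1: "((\<lambda>x. exp (- t * x) * W x) has_integral (1 / (psi t - q))) {0..}" using t0 tp by blast
    have h2: "((\<lambda>x. (w/2) * exp (- t * x) + K * (exp (- t1 * x) * W x - w * exp (- t1 * x)))
          has_integral ((w/2) * (1/t) + K * (1 / (psi t1 - q) - w * (1/t1)))) {0..}"
      by (intro has_integral_add has_integral_mult_right has_integral_diff t0 t1 expint tp)
    have pt: "exp (- t * x) * W x \<le> (w/2) * exp (- t * x) + K * (exp (- t1 * x) * W x - w * exp (- t1 * x))"
      if x: "x \<in> {0..}" for x
    proof (cases "x \<le> c")
      case True
      have "exp (- t * x) * W x \<le> exp (- t * x) * (w/2)" using Wsmall[of x] x True by (intro mult_left_mono) auto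
      then have A1: "exp (- t * x) * W x \<le> (w/2) * exp (- t * x)" by (simp add: mult.commute)
      have "exp (- t1 * x) * W x - w * exp (- t1 * x) = exp (- t1 * x) * (W x - w)" by (simp add: algebra_simps)
      moreover have "exp (- t1 * x) * (W x - w) \<ge> 0" using Wge[of x] x by simp
      ultimately have A2: "K * (exp (- t1 * x) * W x - w * exp (- t1 * x)) \<ge> 0"
        using K by simp
      show ?thesis using A1 A2 by linarith
    next
      case False
      have A: "exp (- t * x) * (W x - w/2) \<le> K * (exp (- t1 * x) * (W x - w))"
      proof (cases "W x - w/2 \<le> 0")
        case True
        then have "exp (- t * x) * (W x - w/2) \<le> 0" by (simp add: mult_nonneg_nonpos)
        moreover have "K * (exp (- t1 * x) * (W x - w)) \<ge> 0" using K Wge[of x] x by simp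
        ultimately show ?thesis by linarith
      next
        case nt: False
        have "- t * x \<le> -(t - t1) * c + - t1 * x"
        proof -
          have "(t - t1) * c \<le> (t - t1) * x" using False t by (intro mult_left_mono) auto
          then show ?thesis by (simp add: algebra_simps)
        qed
        then have "exp (- t * x) \<le> K * exp (- t1 * x)" unfolding K_def by (simp flip: exp_add)
        then have "exp (- t * x) * (W x - w/2) \<le> K * exp (- t1 * x) * (W x - w/2)"
          using nt by (intro mult_right_mono) auto
        also have "\<dots> \<le> K * exp (- t1 * x) * (W x - w)" using w K by (intro mult_left_mono) auto
        finally show ?thesis by (simp add: algebra_simps)
      qed
      then show ?thesis by (simp add: algebra_simps)
    qed
    have "1 / (psi t - q) \<le> (w/2) * (1/t) + K * (1 / (psi t1 - q) - w * (1/t1))"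
      by (rule has_integral_le[OF h1 h2]) (use pt in auto)
    then show ?thesis unfolding M_def K_def by simp
  qed
  have ev2: "eventually (\<lambda>t. t * exp (-(t - t1) * c) * \<bar>M\<bar> < -w/2) at_top"
  proof -
    have "((\<lambda>t. t * exp (-(t - t1) * c) * \<bar>M\<bar>) \<longlongrightarrow> 0 * \<bar>M\<bar>) at_top"
      by (intro tendsto_mult lim_aux c tendsto_const)
    then show ?thesis using w by (simp add: order_tendstoD)
  qed
  have ev3: "eventually (\<lambda>t. t \<ge> t1) at_top" by (rule eventually_ge_at_top)
  have "eventually (\<lambda>t. t * exp (-(t - t1) * c) * \<bar>M\<bar> < -w/2 \<and> t \<ge> t1) at_top"
    using ev2 ev3 by (rule eventually_conj)
  then have "eventually (\<lambda>n. real n * exp (-(real n - t1) * c) * \<bar>M\<bar> < -w/2 \<and> real n \<ge> t1) sequentially"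
    using filterlim_real_sequentially by (rule filterlim_iff[THEN iffD1, rule_format, rotated])
  then have "eventually (\<lambda>n. (real n * exp (-(real n - t1) * c) * \<bar>M\<bar> < -w/2 \<and> real n \<ge> t1) \<and> psi (real n) > q) sequentially"
    using ev by (rule eventually_conj)
  then obtain N where N: "\<forall>n\<ge>N. (real n * exp (-(real n - t1) * c) * \<bar>M\<bar> < -w/2 \<and> real n \<ge> t1) \<and> psi (real n) > q"
    unfolding eventually_sequentially by blast
  define t where "t = real N"
  have n: "t * exp (-(t - t1) * c) * \<bar>M\<bar> < -w/2" "t \<ge> t1" "psi t > q"
    using N unfolding t_def by auto
  have tp: "t > 0" using n t1 by simp
  define E where "E = exp (-(t - t1) * c)"
  have E: "E > 0" unfolding E_def by simp
  have b1: "1 / (psi t - q) \<le> (w/2) / t + E * M" using bound[OF n(2)] unfolding E_def .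
  have b2: "E * M \<le> E * \<bar>M\<bar>" using E by (intro mult_left_mono) auto
  have "(E * \<bar>M\<bar>) * t < -w/2" using n(1) unfolding E_def by (simp add: mult_ac)
  then have b3: "E * \<bar>M\<bar> < (-w/2) / t" by (simp only: pos_less_divide_eq[OF tp])
  have b4: "(w/2) / t + (-w/2) / t = 0"
    using add_divide_distrib[of "w/2" "-w/2" t, symmetric] by simp
  have "1 / (psi t - q) < 0" using b1 b2 b3 b4 by linarith
  moreover have "psi t - q > 0" using n by simp
  ultimately show False by simp
qed



lemma lim_phi:
  fixes z :: real assumes "z > 0"
  shows "((\<lambda>n. (exp (- real n * z) - 1 + real n * z) / real n) \<longlongrightarrow> z) sequentially"
  using assms by real_asymp

lemma phi_nonneg: "0 \<le> exp (- t * z) - 1 + t * (z::real)"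
  using exp_ge_add_one_self[of "- t * z"] by simp

lemma phi_le_lin: assumes "t \<ge> 0" "z \<ge> 0" shows "exp (- t * z) - 1 + t * (z::real) \<le> t * z"
  using assms by (simp add: mult_nonneg_nonneg)

lemma phi_le_quad: assumes "t \<ge> 0" "z \<ge> 0" shows "exp (- t * z) - 1 + t * (z::real) \<le> (t * z)\<^sup>2 / 2"
proof -
  define s where "s = t * z"
  have s: "s \<ge> 0" using assms unfolding s_def by simp
  have e1: "1 + s + s\<^sup>2 / 2 \<le> exp s" using exp_lower_Taylor_quadratic[OF s] .
  have "s\<^sup>2 / 2 \<ge> 0" by simp
  then have pos: "1 + s + s\<^sup>2 / 2 > 0" using s by linarith
  have "exp (- s) = 1 / exp s" by (simp add: exp_minus field_simps)
  also have "\<dots> \<le> 1 / (1 + s + s\<^sup>2 / 2)" using e1 pos by (intro divide_left_mono) auto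
  also have "\<dots> \<le> 1 - s + s\<^sup>2 / 2"
  proof -
    have "(1 + s + s\<^sup>2 / 2) * (1 - s + s\<^sup>2 / 2) = 1 + s^4/4"
      by (simp add: algebra_simps power2_eq_square power4_eq_xxxx)
    moreover have "s^4 / 4 \<ge> 0" by simp
    ultimately have "1 \<le> (1 + s + s\<^sup>2 / 2) * (1 - s + s\<^sup>2 / 2)" by linarith
    then show ?thesis using pos by (simp add: divide_le_eq mult.commute)
  qed
  finally have "exp (- s) \<le> 1 - s + s\<^sup>2 / 2" .
  then show ?thesis unfolding s_def by simp
qed

lemma phi_le_min: assumes "t \<ge> 0" "z > 0"
  shows "exp (- t * z) - 1 + t * (z::real) \<le> (t + t\<^sup>2) * min (z\<^sup>2) z"
proof (cases "z \<le> 1")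
  case True
  then have "min (z\<^sup>2) z = z\<^sup>2" using assms by (simp add: power2_eq_square mult_left_le_one_le)
  moreover have "(t * z)\<^sup>2 / 2 \<le> (t + t\<^sup>2) * z\<^sup>2" using assms by (simp add: power_mult_distrib algebra_simps)
  moreover have "exp (- t * z) - 1 + t * (z::real) \<le> (t * z)\<^sup>2 / 2" using phi_le_quad[of t z] assms by simp
  ultimately show ?thesis by linarith
next
  case False
  then have mz: "min (z\<^sup>2) z = z" using assms by (simp add: power2_eq_square)
  have "t * z \<le> (t + t\<^sup>2) * z" using assms by (simp add: algebra_simps)
  moreover have "exp (- t * z) - 1 + t * (z::real) \<le> t * z" using phi_le_lin[of t z] assms by simp
  ultimately show ?thesis unfolding mz by linarith
qed


lemma psi_growth:
  fixes gam sig :: real and Lm :: "real measure"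
  assumes levy: "fm_levy_measure Lm" and ns: "\<not> is_subordinator_LK gam sig Lm"
  shows "\<exists>c>0. eventually (\<lambda>n. psiLK gam sig Lm (real n) \<ge> c * real n) sequentially"
proof -
  have sets: "sets Lm = sets borel" and null0: "emeasure Lm {..0} = 0"
    and intmin: "integrable Lm (\<lambda>z. min (z\<^sup>2) z)"
    using levy unfolding fm_levy_measure_def by auto
  have AEpos: "AE z in Lm. z > 0"
  proof (rule AE_I')
    have "{..0::real} \<in> sets Lm" using sets by simp
    then show "{..0::real} \<in> null_sets Lm" using null0 by (simp add: null_sets_def)
    show "{z \<in> space Lm. \<not> 0 < z} \<subseteq> {..0}" by auto
  qed
  have mcong: "f \<in> borel_measurable Lm \<longleftrightarrow> f \<in> borel_measurable borel" for f :: "real \<Rightarrow> 'x::topological_space"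
    by (simp add: measurable_cong_sets[OF sets refl])
  have meas: "(\<lambda>z. exp (- t * z) - 1 + t * z) \<in> borel_measurable Lm" for t :: real
    unfolding mcong by measurable
  have int: "integrable Lm (\<lambda>z. exp (- t * z) - 1 + t * z)" if t: "t \<ge> 0" for t :: real
  proof (rule Bochner_Integration.integrable_bound[OF integrable_mult_right[OF intmin, of "t + t\<^sup>2"] meas])
    show "AE x in Lm. norm (exp (- t * x) - 1 + t * x) \<le> norm ((t + t\<^sup>2) * min (x\<^sup>2) x)"
      using AEpos
    proof eventually_elim
      case (elim z)
      have "(t + t\<^sup>2) * min (z\<^sup>2) z \<ge> 0" using t elim by simp
      then show ?case using phi_nonneg[of t z] phi_le_min[OF t elim] by simp
    qed
  qed
  have psi_eq: "psiLK gam sig Lm t = gam * t + sig\<^sup>2 * t\<^sup>2 / 2 + integral\<^sup>L Lm (\<lambda>z. exp (- t * z) - 1 + t * z)" for t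
    by (simp add: psiLK_def)
  have intnn: "integral\<^sup>L Lm (\<lambda>z. exp (- t * z) - 1 + t * z) \<ge> 0" for t
    by (rule Bochner_Integration.integral_nonneg) (rule phi_nonneg)
  show ?thesis
  proof (cases "sig = 0")
    case False
    have s2: "sig\<^sup>2 > 0" using False by simp
    define N where "N = nat \<lceil>2 * (1 - gam) / sig\<^sup>2\<rceil>"
    have "eventually (\<lambda>n. n \<ge> N) sequentially" by (rule eventually_ge_at_top)
    then have "eventually (\<lambda>n. psiLK gam sig Lm (real n) \<ge> 1 * real n) sequentially"
    proof eventually_elim
      case (elim n)
      have "real n \<ge> 2 * (1 - gam) / sig\<^sup>2" using elim unfolding N_def by linarith
      then have "real n * sig\<^sup>2 \<ge> 2 * (1 - gam)" using s2 by (simp add: pos_divide_le_eq)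
      then have "sig\<^sup>2 * real n / 2 + gam \<ge> 1" by (simp add: field_simps mult.commute)
      then have "real n * (sig\<^sup>2 * real n / 2 + gam) \<ge> real n * 1" by (intro mult_left_mono) auto
      then have "gam * real n + sig\<^sup>2 * (real n)\<^sup>2 / 2 \<ge> real n" by (simp add: algebra_simps power2_eq_square)
      then show ?case using psi_eq[of "real n"] intnn[of "real n"] by simp
    qed
    then show ?thesis by (intro exI[of _ 1]) simp
  next
    case True
    show ?thesis
    proof (cases "gam > 0")
      case True
      have "eventually (\<lambda>n. psiLK gam sig Lm (real n) \<ge> gam * real n) sequentially"
        using psi_eq intnn \<open>sig = 0\<close> by simp
      then show ?thesis using True by blast
    next
    case False
    have gle: "gam \<le> 0" using False by simp
    have alt: "\<not> integrable Lm (\<lambda>z. z) \<or> gam + integral\<^sup>L Lm (\<lambda>z. z) > 0"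
      using ns \<open>sig = 0\<close> unfolding is_subordinator_LK_def by auto
    define I where "I = (\<integral>\<^sup>+ z. ennreal z \<partial>Lm)"
    have AEnn: "AE z in Lm. 0 \<le> z" using AEpos by eventually_elim simp
    have mid: "(\<lambda>z::real. z) \<in> borel_measurable Lm" unfolding mcong by measurable
    obtain r where r: "r \<ge> 0" "gam + r > 0" "ennreal r < I"
    proof (cases "integrable Lm (\<lambda>z. z)")
      case True
      have I': "I = ennreal (integral\<^sup>L Lm (\<lambda>z. z))" unfolding I_def
        by (rule nn_integral_eq_integral[OF True AEnn])
      have nn: "integral\<^sup>L Lm (\<lambda>z. z) \<ge> 0" by (rule integral_nonneg_AE[OF AEnn])
      have gp: "gam + integral\<^sup>L Lm (\<lambda>z. z) > 0" using alt True by simp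
      define m where "m = max 0 (-gam)"
      define r where "r = (integral\<^sup>L Lm (\<lambda>z. z) + m) / 2"
      have m: "m < integral\<^sup>L Lm (\<lambda>z. z)" "m \<ge> 0" "m \<ge> -gam" using nn gp gle unfolding m_def by auto
      have r1: "r \<ge> 0" "r > m" "r < integral\<^sup>L Lm (\<lambda>z. z)" using m unfolding r_def by auto
      show thesis
      proof (rule that[of r])
        show "0 \<le> r" using r1 by simp
        show "0 < gam + r" using r1 m by simp
        show "ennreal r < I" unfolding I' using r1 by (simp add: ennreal_less_iff)
      qed
    next
      case False
      have "I = \<infinity>"
      proof (rule ccontr)
        assume "I \<noteq> \<infinity>"
        then have "(\<integral>\<^sup>+ z. ennreal z \<partial>Lm) = ennreal (enn2real I)" unfolding I_def
          by (simp add: less_top)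
        then have "integrable Lm (\<lambda>z. z)"
          by (intro integrableI_nn_integral_finite[OF mid AEnn])
        then show False using False by simp
      qed
      then show thesis using that[of "max 0 (-gam) + 1"] by auto
    qed
    define u where "u n z = ennreal ((exp (- real n * z) - 1 + real n * z) / real n)" for n z
    have umeas: "u n \<in> borel_measurable Lm" for n
      unfolding u_def mcong by measurable
    have lim: "AE z in Lm. ennreal z \<le> liminf (\<lambda>n. u n z)"
      using AEpos
    proof eventually_elim
      case (elim z)
      have "((\<lambda>n. u n z) \<longlongrightarrow> ennreal z) sequentially"
        unfolding u_def by (intro tendsto_ennrealI lim_phi elim)
      then have "liminf (\<lambda>n. u n z) = ennreal z" by (intro lim_imp_Liminf) auto
      then show ?case by simp
    qed
    have "I \<le> (\<integral>\<^sup>+ z. liminf (\<lambda>n. u n z) \<partial>Lm)" unfolding I_def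
      by (rule nn_integral_mono_AE[OF lim])
    also have "\<dots> \<le> liminf (\<lambda>n. integral\<^sup>N Lm (u n))" by (rule nn_integral_liminf[OF umeas])
    finally have "ennreal r < liminf (\<lambda>n. integral\<^sup>N Lm (u n))" using r(3) by (rule order.strict_trans2[rotated])
    then have ev: "eventually (\<lambda>n. ennreal r < integral\<^sup>N Lm (u n)) sequentially" by (rule less_LiminfD)
    have eq: "integral\<^sup>N Lm (u n) = ennreal (integral\<^sup>L Lm (\<lambda>z. exp (- real n * z) - 1 + real n * z) / real n)" for n
    proof -
      have "integral\<^sup>N Lm (u n) = ennreal (integral\<^sup>L Lm (\<lambda>z. (exp (- real n * z) - 1 + real n * z) / real n))"
        unfolding u_def
      proof (rule nn_integral_eq_integral)
        show "integrable Lm (\<lambda>z. (exp (- real n * z) - 1 + real n * z) / real n)"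
          using int[of "real n"] by (intro integrable_divide_zero) simp
        show "AE z in Lm. 0 \<le> (exp (- real n * z) - 1 + real n * z) / real n"
          using phi_nonneg[of "real n"] by simp
      qed
      then show ?thesis by simp
    qed
    have "eventually (\<lambda>n. ennreal r < integral\<^sup>N Lm (u n) \<and> n \<ge> 1) sequentially"
      using ev eventually_ge_at_top by (rule eventually_conj)
    then have "eventually (\<lambda>n. psiLK gam sig Lm (real n) \<ge> (gam + r) * real n) sequentially"
    proof eventually_elim
      case (elim n)
      have npos: "real n > 0" using elim by simp
      have "ennreal r < ennreal (integral\<^sup>L Lm (\<lambda>z. exp (- real n * z) - 1 + real n * z) / real n)"
        using elim eq by simp
      then have "r < integral\<^sup>L Lm (\<lambda>z. exp (- real n * z) - 1 + real n * z) / real n"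
        using r(1) by (simp add: ennreal_less_iff)
      then have "r * real n < integral\<^sup>L Lm (\<lambda>z. exp (- real n * z) - 1 + real n * z)"
        using npos by (simp add: pos_less_divide_eq)
      then show ?case using psi_eq[of "real n"] \<open>sig = 0\<close> by (simp add: algebra_simps)
    qed
    then show ?thesis using r(2) by blast
    qed
  qed
qed

theorem mainTheorem4:
  fixes gam sig :: real and Lm :: "real measure"
    and q \<delta> \<beta> \<rho> :: real
    and WW W :: "real \<Rightarrow> real"
    and dX b0 zb astar bstar :: real
  assumes levy: "fm_levy_measure Lm"
    and not_sub: "\<not> is_subordinator_LK gam sig Lm"
    and q: "q > 0" and delta: "\<delta> > 0" and beta: "0 < \<beta>" "\<beta> < 1"
    and WW: "is_scale_function (psiLK gam sig Lm) q WW"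
    and W: "is_scale_function (\<lambda>\<theta>. psiLK gam sig Lm \<theta> + \<delta> * \<theta>) q W"
    and dX: "((\<lambda>\<theta>. psiLK gam sig Lm \<theta> + \<delta> * \<theta>) has_real_derivative dX) (at 0 within {0..})"
    and Gam00: "GammaF q \<delta> \<beta> \<rho> WW W dX 0 0 > 0"
    and b0: "b0 \<ge> 0" "Zbar q W b0 = (\<delta> - q * \<rho>) / (q * \<beta>) - dX / q"
    and zb: "zb \<ge> 0" "Zfun q W zb = 1 / \<beta>"
    and bstar: "bstar > 0"
    and astar: "astar \<in> {0..bstar}"
    and astar_min: "\<forall>a\<in>{0..bstar}. GammaF q \<delta> \<beta> \<rho> WW W dX astar bstar
                                      \<le> GammaF q \<delta> \<beta> \<rho> WW W dX a bstar"
    and min_zero: "GammaF q \<delta> \<beta> \<rho> WW W dX astar bstar = 0"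
  shows "b0 > 0 \<and> GammaF q \<delta> \<beta> \<rho> WW W dX 0 b0 = 0
       \<and> (b0 \<le> zb \<longrightarrow> astar = 0)
       \<and> (b0 > zb \<longrightarrow> 0 < astar \<and> astar < bstar)
       \<and> min b0 zb \<le> bstar \<and> bstar \<le> b0"
proof -
  have evq: "eventually (\<lambda>n. f (real n) > q) sequentially"
    if c: "c > 0" and ev: "eventually (\<lambda>n. f (real n) \<ge> c * real n) sequentially" for f :: "real \<Rightarrow> real" and c
  proof -
    have "eventually (\<lambda>n. n \<ge> nat \<lceil>q / c\<rceil> + 1) sequentially" by (rule eventually_ge_at_top)
    with ev show ?thesis
    proof eventually_elim
      case (elim n)
      have "real n > q / c" using elim(2) by linarith
      then have "c * real n > q" using c by (simp add: field_simps)
      then show ?case using elim(1) by linarith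
    qed
  qed
  obtain c where c: "c > 0" and evc: "eventually (\<lambda>n. psiLK gam sig Lm (real n) \<ge> c * real n) sequentially"
    using psi_growth[OF levy not_sub] by blast
  have evY: "eventually (\<lambda>n. psiLK gam sig Lm (real n) > q) sequentially" by (rule evq[OF c evc])
  have evc2: "eventually (\<lambda>n. psiLK gam sig Lm (real n) + \<delta> * real n \<ge> c * real n) sequentially"
    using evc
  proof eventually_elim
    case (elim n)
    have "\<delta> * real n \<ge> 0" using delta by simp
    then show ?case using elim by linarith
  qed
  have evX: "eventually (\<lambda>n. psiLK gam sig Lm (real n) + \<delta> * real n > q) sequentially"
    using evq[OF c evc2] by simp
  have WW0: "WW 0 \<ge> 0" by (rule scale_W0_nonneg[OF WW evY])
  have W0: "W 0 \<ge> 0" by (rule scale_W0_nonneg[OF W evX])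
  show ?thesis
    by (rule main_core[OF scale_facts(1)[OF WW] scale_facts(2)[OF WW] WW0 scale_facts(1)[OF W] scale_facts(2)[OF W] W0
          q delta beta Gam00 b0 zb bstar astar astar_min min_zero])
qed

end
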